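(* Let $K/F$ be a cyclic Galois extension of number fields of degree $m$ with $\mathrm{Gal}(K/F)=\langle\sigma\rangle$, and let $\mathcal{O}_F\subset\mathcal{O}_K$ be the rings of integers. Let $d\in\mathcal{O}_K^\times$ be such that $t^m-d$ is irreducible in the skew polynomial ring $K[t;\sigma]$, so that $(K/F,\sigma,d)=K[t;\sigma]/K[t;\sigma](t^m-d)$ is a nonassociative cyclic division algebra, and let $\Lambda=\mathcal{O}_K[t;\sigma]/\mathcal{O}_K[t;\sigma](t^m-d)$ be its natural order. Let $\mathcal{I}$ be a non-zero ideal of $\mathcal{O}_F$. Define $\overline{\sigma}$ on $\mathcal{O}_K/\mathcal{I}\mathcal{O}_K$ by $\overline{\sigma}(u+\mathcal{I}\mathcal{O}_K)=\sigma(u)+\mathcal{I}\mathcal{O}_K$ and put $\bar d=d+\mathcal{I}\mathcal{O}_K$. Then $\mathcal{I}\Lambda$ is a two-sided ideal of $\Lambda$ and $$\Lambda/\mathcal{I}\Lambda\cong\big((\mathcal{O}_K/\mathcal{I}\mathcal{O}_K)/(\mathcal{O}_F/\mathcal{I}),\overline{\sigma},\bar d\big),$$ a generalized nonassociative cyclic algebra over $\mathcal{O}_F/\mathcal{I}$ (the isomorphism being induced by reducing coefficients modulo $\mathcal{I}\mathcal{O}_K$).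
   Context: For a unital associative ring $S$ and an injective ring endomorphism $\sigma$ of $S$, $S[t;\sigma]$ denotes the skew polynomial ring of polynomials $\sum a_it^i$, $a_i\in S$, with multiplication determined by $ta=\sigma(a)t$. For a monic $f\in S[t;\sigma]$ of degree $m$, every $g$ has a unique right division $g=qf+r$ with $\deg r<m$; the Petit algebra $S[t;\sigma]/S[t;\sigma]f$ is the additive group of polynomials of degree $<m$ with multiplication $g\circ h=gh \bmod_r f$ (remainder of right division by $f$); it is a unital, in general nonassociative, ring. For commutative rings $S_0\subset S$ with $S_0\subset\mathrm{Fix}(\sigma)$ and $c\in S$, the (generalized) nonassociative cyclic algebra $(S/S_0,\sigma,c)$ is the Petit algebra $S[t;\sigma]/S[t;\sigma](t^m-c)$, regarded as an $S_0$-algebra. Elements of $\Lambda$ are polynomials $\sum_{i=0}^{m-1}a_it^i$ with $a_i\in\mathcal{O}_K$, and $\mathcal{I}\Lambda=\{\sum_{i=0}^{m-1}a_it^i: a_i\in\mathcal{I}\mathcal{O}_K\}$. *)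

theory Defs
  imports "HOL-Algebra.QuotRing" "HOL-Computational_Algebra.Polynomial"
begin

text \<open>A subset of a commutative ring type, closed under the ring operations, viewed as a
  HOL-Algebra ring record (used for K itself, O_K and O_F).\<close>
definition ring_on :: "'a::comm_ring_1 set \<Rightarrow> 'a ring" where
  "ring_on A = \<lparr>carrier = A, monoid.mult = (*), one = 1, zero = 0, add = (+)\<rparr>"

text \<open>Algebraic integers of a field of characteristic 0 (roots of monic integer polynomials);
  for a number field K this is the ring of integers O_K.\<close>
definition algebraic_integers :: "'a::field_char_0 set" where
  "algebraic_integers = {x. \<exists>p::int poly. lead_coeff p = 1 \<and> poly (map_poly of_int p) x = 0}"

text \<open>Finite dimensionality over Q (K a number field = the type is finite-dimensional over Q).\<close>
definition finite_dim_over_Q :: "'a::field_char_0 set \<Rightarrow> bool" where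
  "finite_dim_over_Q A \<longleftrightarrow>
     (\<exists>B. set B \<subseteq> A \<and> (\<forall>x\<in>A. \<exists>c::nat \<Rightarrow> rat. x = (\<Sum>i<length B. of_rat (c i) * B ! i)))"

definition spoly :: "('b,'m) ring_scheme \<Rightarrow> (nat \<Rightarrow> 'b) set" where
  "spoly R = {p. (\<forall>i. p i \<in> carrier R) \<and> finite {i. p i \<noteq> \<zero>\<^bsub>R\<^esub>}}"

definition pzero :: "('b,'m) ring_scheme \<Rightarrow> nat \<Rightarrow> 'b" where
  "pzero R = (\<lambda>i. \<zero>\<^bsub>R\<^esub>)"

definition pone :: "('b,'m) ring_scheme \<Rightarrow> nat \<Rightarrow> 'b" where
  "pone R = (\<lambda>i. if i = 0 then \<one>\<^bsub>R\<^esub> else \<zero>\<^bsub>R\<^esub>)"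

definition padd :: "('b,'m) ring_scheme \<Rightarrow> (nat \<Rightarrow> 'b) \<Rightarrow> (nat \<Rightarrow> 'b) \<Rightarrow> nat \<Rightarrow> 'b" where
  "padd R p q = (\<lambda>i. p i \<oplus>\<^bsub>R\<^esub> q i)"

definition pneg :: "('b,'m) ring_scheme \<Rightarrow> (nat \<Rightarrow> 'b) \<Rightarrow> nat \<Rightarrow> 'b" where
  "pneg R p = (\<lambda>i. \<ominus>\<^bsub>R\<^esub> p i)"

definition psmul :: "('b,'m) ring_scheme \<Rightarrow> 'b \<Rightarrow> (nat \<Rightarrow> 'b) \<Rightarrow> nat \<Rightarrow> 'b" where
  "psmul R a p = (\<lambda>i. a \<otimes>\<^bsub>R\<^esub> p i)"

definition skew_mult ::
  "('b,'m) ring_scheme \<Rightarrow> ('b \<Rightarrow> 'b) \<Rightarrow> (nat \<Rightarrow> 'b) \<Rightarrow> (nat \<Rightarrow> 'b) \<Rightarrow> nat \<Rightarrow> 'b" where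
  "skew_mult R \<sigma> p q = (\<lambda>n. \<Oplus>\<^bsub>R\<^esub> i\<in>{..n}. p i \<otimes>\<^bsub>R\<^esub> (\<sigma> ^^ i) (q (n - i)))"

definition sdeg :: "('b,'m) ring_scheme \<Rightarrow> (nat \<Rightarrow> 'b) \<Rightarrow> nat" where
  "sdeg R f = (if \<forall>i. f i = \<zero>\<^bsub>R\<^esub> then 0 else Max {i. f i \<noteq> \<zero>\<^bsub>R\<^esub>})"

definition skew_unit :: "('b,'m) ring_scheme \<Rightarrow> ('b \<Rightarrow> 'b) \<Rightarrow> (nat \<Rightarrow> 'b) \<Rightarrow> bool" where
  "skew_unit R \<sigma> g \<longleftrightarrow> g \<in> spoly R \<and>
     (\<exists>h\<in>spoly R. skew_mult R \<sigma> g h = pone R \<and> skew_mult R \<sigma> h g = pone R)"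

definition skew_irreducible :: "('b,'m) ring_scheme \<Rightarrow> ('b \<Rightarrow> 'b) \<Rightarrow> (nat \<Rightarrow> 'b) \<Rightarrow> bool" where
  "skew_irreducible R \<sigma> f \<longleftrightarrow> f \<in> spoly R \<and> f \<noteq> pzero R \<and> \<not> skew_unit R \<sigma> f \<and>
     (\<forall>g\<in>spoly R. \<forall>h\<in>spoly R. f = skew_mult R \<sigma> g h \<longrightarrow> skew_unit R \<sigma> g \<or> skew_unit R \<sigma> h)"

definition right_rem ::
  "('b,'m) ring_scheme \<Rightarrow> ('b \<Rightarrow> 'b) \<Rightarrow> (nat \<Rightarrow> 'b) \<Rightarrow> (nat \<Rightarrow> 'b) \<Rightarrow> nat \<Rightarrow> 'b" where
  "right_rem R \<sigma> g f = (THE r. r \<in> spoly R \<and> (\<forall>i\<ge>sdeg R f. r i = \<zero>\<^bsub>R\<^esub>) \<and>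
       (\<exists>q\<in>spoly R. g = padd R (skew_mult R \<sigma> q f) r))"

definition petit_carrier :: "('b,'m) ring_scheme \<Rightarrow> (nat \<Rightarrow> 'b) \<Rightarrow> (nat \<Rightarrow> 'b) set" where
  "petit_carrier R f = {p \<in> spoly R. \<forall>i\<ge>sdeg R f. p i = \<zero>\<^bsub>R\<^esub>}"

definition petit_mult ::
  "('b,'m) ring_scheme \<Rightarrow> ('b \<Rightarrow> 'b) \<Rightarrow> (nat \<Rightarrow> 'b) \<Rightarrow> (nat \<Rightarrow> 'b) \<Rightarrow> (nat \<Rightarrow> 'b) \<Rightarrow> nat \<Rightarrow> 'b" where
  "petit_mult R \<sigma> f p q = right_rem R \<sigma> (skew_mult R \<sigma> p q) f"

text \<open>t^m - c (for m > 0)\<close>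
definition cyc_poly :: "('b,'m) ring_scheme \<Rightarrow> nat \<Rightarrow> 'b \<Rightarrow> nat \<Rightarrow> 'b" where
  "cyc_poly R m c = (\<lambda>i. if i = m then \<one>\<^bsub>R\<^esub> else if i = 0 then \<ominus>\<^bsub>R\<^esub> c else \<zero>\<^bsub>R\<^esub>)"

definition sigma_bar :: "('b,'m) ring_scheme \<Rightarrow> 'b set \<Rightarrow> ('b \<Rightarrow> 'b) \<Rightarrow> 'b set \<Rightarrow> 'b set" where
  "sigma_bar R J \<sigma> X = a_r_coset R J (\<sigma> (SOME u. u \<in> X))"

definition reduce_coeffs :: "('b,'m) ring_scheme \<Rightarrow> 'b set \<Rightarrow> (nat \<Rightarrow> 'b) \<Rightarrow> nat \<Rightarrow> 'b set" where
  "reduce_coeffs R J p = (\<lambda>i. a_r_coset R J (p i))"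

end

theory Submission
  imports Defs "Jordan_Normal_Form.Char_Poly"
begin

hide_const (open) Ring_Hom.ring_hom

lemma ai_crit_nat:
  fixes x :: "'a::field_char_0" and n i0 :: nat and v :: "nat \<Rightarrow> 'a" and a :: "nat \<Rightarrow> nat \<Rightarrow> int"
  assumes "i0 < n" "v i0 \<noteq> 0" "\<forall>i<n. x * v i = (\<Sum>j<n. of_int (a i j) * v j)"
  shows "x \<in> algebraic_integers"
proof -
  define A :: "int mat" where "A = mat n n (\<lambda>(i,j). a i j)"
  have A: "A \<in> carrier_mat n n" by (simp add: A_def)
  define B where "B = map_mat (of_int :: int \<Rightarrow> 'a) A"
  have B: "B \<in> carrier_mat n n" using A by (simp add: B_def)
  define w where "w = vec n v"
  have "eigenvector B w x"
    unfolding eigenvector_def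
  proof (intro conjI)
    show "w \<in> carrier_vec (dim_row B)" using B by (simp add: w_def)
    show "w \<noteq> 0\<^sub>v (dim_row B)"
    proof
      assume "w = 0\<^sub>v (dim_row B)"
      hence "w $ i0 = 0" using B assms(1) by simp
      thus False using assms(1,2) by (simp add: w_def)
    qed
    show "B *\<^sub>v w = x \<cdot>\<^sub>v w"
    proof (rule eq_vecI)
      show "dim_vec (B *\<^sub>v w) = dim_vec (x \<cdot>\<^sub>v w)" using B by (simp add: w_def)
      fix i assume "i < dim_vec (x \<cdot>\<^sub>v w)"
      hence i: "i < n" by (simp add: w_def)
      have "(B *\<^sub>v w) $ i = (\<Sum>j\<in>{0..<n}. of_int (a i j) * v j)"
        using i B by (simp add: mult_mat_vec_def scalar_prod_def w_def B_def A_def)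
      also have "\<dots> = x * v i" using assms(3) i by (simp add: lessThan_atLeast0)
      finally show "(B *\<^sub>v w) $ i = (x \<cdot>\<^sub>v w) $ i" using i by (simp add: w_def)
    qed
  qed
  then have "eigenvalue B x" by (auto simp: eigenvalue_def)
  hence "poly (char_poly B) x = 0" using eigenvalue_root_char_poly[OF B] by simp
  moreover have "char_poly B = of_int_poly (char_poly A)" using of_int_hom.char_poly_hom[OF A] B_def by simp
  moreover have "lead_coeff (char_poly A) = 1" using degree_monic_char_poly[OF A] by simp
  ultimately show ?thesis unfolding algebraic_integers_def by auto
qed

lemma ai_crit_set:
  fixes x :: "'a::field_char_0" and S :: "'b set"
  assumes "finite S" "i0 \<in> S" "v i0 \<noteq> 0" "\<forall>i\<in>S. x * v i = (\<Sum>j\<in>S. of_int (a i j) * v j)"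
  shows "x \<in> algebraic_integers"
proof -
  obtain g where g: "bij_betw g {0..<card S} S" using ex_bij_betw_nat_finite[OF assms(1)] by blast
  obtain k0 where k0: "k0 < card S" "g k0 = i0" using g assms(2) unfolding bij_betw_def by force
  show ?thesis
  proof (rule ai_crit_nat[of k0 "card S" "\<lambda>i. v (g i)" x "\<lambda>i j. a (g i) (g j)"])
    show "k0 < card S" "v (g k0) \<noteq> 0" using k0 assms(3) by auto
    show "\<forall>i<card S. x * v (g i) = (\<Sum>j<card S. of_int (a (g i) (g j)) * v (g j))"
    proof (intro allI impI)
      fix i assume i: "i < card S"
      hence "g i \<in> S" using g unfolding bij_betw_def by auto
      hence "x * v (g i) = (\<Sum>j\<in>S. of_int (a (g i) j) * v j)" using assms(4) by blast
      also have "\<dots> = (\<Sum>j\<in>{0..<card S}. of_int (a (g i) (g j)) * v (g j))"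
        using sum.reindex_bij_betw[OF g, of "\<lambda>j. of_int (a (g i) j) * v j"] by simp
      finally show "x * v (g i) = (\<Sum>j<card S. of_int (a (g i) (g j)) * v (g j))"
        by (simp add: lessThan_atLeast0)
    qed
  qed
qed

lemma ai_conv:
  fixes x :: "'a::field_char_0"
  assumes "x \<in> algebraic_integers"
  shows "\<exists>(S::nat set) v a. finite S \<and> (\<exists>i\<in>S. v i \<noteq> 0) \<and>
            (\<forall>i\<in>S. x * v i = (\<Sum>j\<in>S. of_int (a i j) * v j))"
proof -
  obtain p :: "int poly" where p: "lead_coeff p = 1" "poly (map_poly of_int p) x = 0"
    using assms unfolding algebraic_integers_def by blast
  define n where "n = degree p"
  have deg: "degree (map_poly (of_int :: int \<Rightarrow> 'a) p) = n"
    unfolding n_def by (rule degree_map_poly) (use p in auto)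
  have coeffn: "coeff (map_poly (of_int :: int \<Rightarrow> 'a) p) n = 1" using p(1) unfolding n_def
    by (simp add: coeff_map_poly)
  have "0 = (\<Sum>i\<le>n. coeff (map_poly of_int p) i * x ^ i)"
    using p(2) deg by (simp add: poly_altdef)
  also have "\<dots> = (\<Sum>i<n. of_int (coeff p i) * x ^ i) + x ^ n"
    using coeffn by (simp add: lessThan_Suc_atMost[symmetric] coeff_map_poly)
  finally have xn: "x ^ n = (\<Sum>j<n. of_int (- coeff p j) * x ^ j)"
    by (simp add: sum_negf eq_neg_iff_add_eq_0 add.commute)
  have n0: "n > 0"
  proof (rule ccontr)
    assume "\<not> n > 0"
    hence "n = 0" by simp
    thus False using xn by simp
  qed
  define a where "a = (\<lambda>i j. if Suc i < n then (if j = Suc i then 1 else 0) else - coeff p j)"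
  show ?thesis
  proof (intro exI conjI)
    show "finite {..<n}" by simp
    show "\<exists>i\<in>{..<n}. (\<lambda>i. x ^ i) i \<noteq> 0" using n0 by (intro bexI[of _ 0]) auto
    show "\<forall>i\<in>{..<n}. x * x ^ i = (\<Sum>j\<in>{..<n}. of_int (a i j) * x ^ j)"
    proof
      fix i assume i: "i \<in> {..<n}"
      show "x * x ^ i = (\<Sum>j\<in>{..<n}. of_int (a i j) * x ^ j)"
      proof (cases "Suc i < n")
        case True
        have "(\<Sum>j\<in>{..<n}. of_int (a i j) * x ^ j) = (\<Sum>j\<in>{..<n}. if j = Suc i then x ^ j else 0)"
          by (rule sum.cong) (auto simp: a_def True)
        also have "\<dots> = x ^ Suc i" using True by (simp add: sum.delta')
        finally show ?thesis by simp
      next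
        case False
        hence "Suc i = n" using i by simp
        hence "x * x ^ i = x ^ n" by auto
        also note xn
        finally show ?thesis using False by (simp add: a_def)
      qed
    qed
  qed
qed

lemma ai_mult:
  fixes x y :: "'a::field_char_0"
  assumes "x \<in> algebraic_integers" "y \<in> algebraic_integers"
  shows "x * y \<in> algebraic_integers"
proof -
  obtain S :: "nat set" and v a where S: "finite S" "\<exists>i\<in>S. v i \<noteq> 0" "\<forall>i\<in>S. x * v i = (\<Sum>j\<in>S. of_int (a i j) * v j)"
    using ai_conv[OF assms(1)] by blast
  obtain T :: "nat set" and w b where T: "finite T" "\<exists>i\<in>T. w i \<noteq> 0" "\<forall>i\<in>T. y * w i = (\<Sum>j\<in>T. of_int (b i j) * w j)"
    using ai_conv[OF assms(2)] by blast
  obtain i0 j0 where ij: "i0 \<in> S" "v i0 \<noteq> 0" "j0 \<in> T" "w j0 \<noteq> 0" using S T by blast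
  define c where "c = (\<lambda>(i::nat,j::nat) (k::nat,l::nat). a i k * b j l)"
  show ?thesis
  proof (rule ai_crit_set[of "S \<times> T" "(i0,j0)" "\<lambda>(i,j). v i * w j" _ c])
    show "finite (S \<times> T)" using S T by simp
    show "(i0, j0) \<in> S \<times> T" using ij by simp
    show "(case (i0, j0) of (i, j) \<Rightarrow> v i * w j) \<noteq> 0" using ij by simp
    show "\<forall>ij\<in>S \<times> T. x * y * (case ij of (i, j) \<Rightarrow> v i * w j) =
        (\<Sum>kl\<in>S \<times> T. of_int (c ij kl) * (case kl of (i, j) \<Rightarrow> v i * w j))"
    proof
      fix ij assume "ij \<in> S \<times> T"
      then obtain i j where ij': "ij = (i,j)" "i \<in> S" "j \<in> T" by blast
      have "x * y * (v i * w j) = (x * v i) * (y * w j)" by (simp add: mult_ac)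
      also have "\<dots> = (\<Sum>k\<in>S. of_int (a i k) * v k) * (\<Sum>l\<in>T. of_int (b j l) * w l)"
        using S(3) T(3) ij' by simp
      also have "\<dots> = (\<Sum>k\<in>S. \<Sum>l\<in>T. of_int (a i k) * v k * (of_int (b j l) * w l))"
        by (rule sum_product)
      also have "\<dots> = (\<Sum>(k,l)\<in>S \<times> T. of_int (a i k) * v k * (of_int (b j l) * w l))"
        by (rule sum.cartesian_product)
      also have "\<dots> = (\<Sum>kl\<in>S \<times> T. of_int (c ij kl) * (case kl of (i, j) \<Rightarrow> v i * w j))"
        by (rule sum.cong) (auto simp: mult_ac c_def ij')
      finally show "x * y * (case ij of (i, j) \<Rightarrow> v i * w j) =
        (\<Sum>kl\<in>S \<times> T. of_int (c ij kl) * (case kl of (i, j) \<Rightarrow> v i * w j))"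
        using ij' by simp
    qed
  qed
qed

lemma ai_add:
  fixes x y :: "'a::field_char_0"
  assumes "x \<in> algebraic_integers" "y \<in> algebraic_integers"
  shows "x + y \<in> algebraic_integers"
proof -
  obtain S :: "nat set" and v a where S: "finite S" "\<exists>i\<in>S. v i \<noteq> 0" "\<forall>i\<in>S. x * v i = (\<Sum>j\<in>S. of_int (a i j) * v j)"
    using ai_conv[OF assms(1)] by blast
  obtain T :: "nat set" and w b where T: "finite T" "\<exists>i\<in>T. w i \<noteq> 0" "\<forall>i\<in>T. y * w i = (\<Sum>j\<in>T. of_int (b i j) * w j)"
    using ai_conv[OF assms(2)] by blast
  obtain i0 j0 where ij: "i0 \<in> S" "v i0 \<noteq> 0" "j0 \<in> T" "w j0 \<noteq> 0" using S T by blast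
  define c where "c = (\<lambda>(i::nat,j::nat) (k,l). (if l = j then a i k else 0) + (if k = i then b j l else 0))"
  show ?thesis
  proof (rule ai_crit_set[of "S \<times> T" "(i0,j0)" "\<lambda>(i,j). v i * w j" _ c])
    show "finite (S \<times> T)" using S T by simp
    show "(i0, j0) \<in> S \<times> T" using ij by simp
    show "(case (i0, j0) of (i, j) \<Rightarrow> v i * w j) \<noteq> 0" using ij by simp
    show "\<forall>ij\<in>S \<times> T. (x + y) * (case ij of (i, j) \<Rightarrow> v i * w j) =
        (\<Sum>kl\<in>S \<times> T. of_int (c ij kl) * (case kl of (i, j) \<Rightarrow> v i * w j))"
    proof
      fix ij assume "ij \<in> S \<times> T"
      then obtain i j where ij': "ij = (i,j)" "i \<in> S" "j \<in> T" by blast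
      have E1: "(\<Sum>k\<in>S. of_int (a i k) * v k) * w j = (\<Sum>k\<in>S. \<Sum>l\<in>T. if l = j then of_int (a i k) * v k * w l else 0)"
        using S(1) T(1) ij' by (simp add: sum.delta' sum_distrib_right)
      have E2: "v i * (\<Sum>l\<in>T. of_int (b j l) * w l) = (\<Sum>k\<in>S. \<Sum>l\<in>T. if k = i then of_int (b j l) * v k * w l else 0)"
      proof -
        have "(\<Sum>k\<in>S. \<Sum>l\<in>T. if k = i then of_int (b j l) * v k * w l else 0)
             = (\<Sum>k\<in>S. if k = i then (\<Sum>l\<in>T. of_int (b j l) * v k * w l) else 0)"
          by (rule sum.cong) auto
        also have "\<dots> = (\<Sum>l\<in>T. of_int (b j l) * v i * w l)" using S(1) ij' by (simp add: sum.delta')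
        finally show ?thesis by (simp add: sum_distrib_left mult_ac)
      qed
      have "(x + y) * (v i * w j) = (x * v i) * w j + v i * (y * w j)" by (simp add: algebra_simps)
      also have "\<dots> = (\<Sum>k\<in>S. of_int (a i k) * v k) * w j + v i * (\<Sum>l\<in>T. of_int (b j l) * w l)"
        using S(3) T(3) ij' by simp
      also have "\<dots> = (\<Sum>k\<in>S. \<Sum>l\<in>T. if l = j then of_int (a i k) * v k * w l else 0)
                    + (\<Sum>k\<in>S. \<Sum>l\<in>T. if k = i then of_int (b j l) * v k * w l else 0)" using E1 E2 by simp
      also have "\<dots> = (\<Sum>k\<in>S. \<Sum>l\<in>T. of_int (c (i,j) (k,l)) * (v k * w l))"
        by (auto simp: c_def sum.distrib[symmetric] algebra_simps intro!: sum.cong)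
      also have "\<dots> = (\<Sum>kl\<in>S \<times> T. of_int (c ij kl) * (case kl of (i, j) \<Rightarrow> v i * w j))"
        unfolding ij' by (subst sum.cartesian_product) (rule sum.cong, auto)
      finally show "(x + y) * (case ij of (i, j) \<Rightarrow> v i * w j) =
        (\<Sum>kl\<in>S \<times> T. of_int (c ij kl) * (case kl of (i, j) \<Rightarrow> v i * w j))" using ij' by simp
    qed
  qed
qed



lemma hom_crI: "cring R \<Longrightarrow> cring S \<Longrightarrow> h \<in> ring_hom R S \<Longrightarrow> ring_hom_cring R S h"
  by (intro ring_hom_cring.intro ring_hom_cring_axioms.intro)

lemma funpow_ring_hom: "\<sigma> \<in> ring_hom R R \<Longrightarrow> (\<sigma> ^^ i) \<in> ring_hom R R"
  by (induct i) (auto intro: ring_hom_trans)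

context cring
begin

lemma triv_zero: "\<one> = \<zero> \<Longrightarrow> x \<in> carrier R \<Longrightarrow> x = \<zero>"
  by (metis r_one r_null)

lemma spoly_bound:
  assumes "p \<in> spoly R" obtains B where "\<forall>i>B. p i = \<zero>"
proof -
  have "finite {i. p i \<noteq> \<zero>}" using assms by (simp add: spoly_def)
  then obtain B where "\<forall>i\<in>{i. p i \<noteq> \<zero>}. i \<le> B" using finite_nat_set_iff_bounded_le by blast
  hence "\<forall>i>B. p i = \<zero>" by (metis (mono_tags) mem_Collect_eq not_le)
  thus ?thesis by (rule that)
qed

lemma spolyI:
  assumes "\<And>i. p i \<in> carrier R" "\<And>i. i > B \<Longrightarrow> p i = \<zero>"
  shows "p \<in> spoly R"
proof -
  have "{i. p i \<noteq> \<zero>} \<subseteq> {..B}" using assms(2) by (force simp: not_less[symmetric])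
  thus ?thesis using assms(1) unfolding spoly_def by (auto intro: finite_subset)
qed

lemma sdeg_cyc:
  assumes "\<one> \<noteq> \<zero>"
  shows "sdeg R (cyc_poly R m c) = m"
proof -
  have ne: "\<not> (\<forall>i. cyc_poly R m c i = \<zero>)" using assms by (auto simp: cyc_poly_def intro: exI[of _ m])
  have "Max {i. cyc_poly R m c i \<noteq> \<zero>} = m"
    by (rule Max_eqI) (use assms in \<open>auto simp: cyc_poly_def split: if_splits intro: finite_subset[of _ "{..m}"]\<close>)
  thus ?thesis using ne unfolding sdeg_def by auto
qed

end

locale skew = cring R for R (structure) + fixes \<sigma> assumes sig: "\<sigma> \<in> ring_hom R R"
begin

lemma sigp_hom: "(\<sigma> ^^ i) \<in> ring_hom R R" by (rule funpow_ring_hom[OF sig])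

lemma sigp_closed [simp]: "x \<in> carrier R \<Longrightarrow> (\<sigma> ^^ i) x \<in> carrier R"
  using ring_hom_closed[OF sigp_hom] by blast

lemma sigp_one [simp]: "(\<sigma> ^^ i) \<one> = \<one>"
  using ring_hom_one[OF sigp_hom] by blast

lemma sigp_zero [simp]: "(\<sigma> ^^ i) \<zero> = \<zero>"
  using ring_hom_zero[OF sigp_hom] ring_axioms by blast

lemma sigp_neg [simp]: "x \<in> carrier R \<Longrightarrow> (\<sigma> ^^ i) (\<ominus> x) = \<ominus> (\<sigma> ^^ i) x"
proof -
  interpret H: ring_hom_cring R R "\<sigma> ^^ i" by (rule hom_crI[OF is_cring is_cring sigp_hom])
  show "x \<in> carrier R \<Longrightarrow> (\<sigma> ^^ i) (\<ominus> x) = \<ominus> (\<sigma> ^^ i) x" by simp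
qed

lemma skew_mult_closed:
  assumes "\<And>i. p i \<in> carrier R" "\<And>i. q i \<in> carrier R"
  shows "skew_mult R \<sigma> p q n \<in> carrier R"
  unfolding skew_mult_def using assms by (intro finsum_closed) auto

lemma skew_mult_cyc:
  assumes q: "\<And>i. q i \<in> carrier R" and c: "c \<in> carrier R" and m: "0 < m"
  shows "skew_mult R \<sigma> q (cyc_poly R m c) n = (if m \<le> n then q (n - m) else \<zero>) \<oplus> \<ominus> (q n \<otimes> (\<sigma> ^^ n) c)"
proof -
  define F where "F = (\<lambda>i. q i \<otimes> (\<sigma> ^^ i) (cyc_poly R m c (n - i)))"
  have Fc: "\<And>i. F i \<in> carrier R" using q c unfolding F_def by (auto simp: cyc_poly_def)
  have "skew_mult R \<sigma> q (cyc_poly R m c) n = finsum R F (insert n {..<n})"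
    unfolding skew_mult_def F_def by (simp add: lessThan_Suc_atMost[symmetric] lessThan_Suc)
  also have "\<dots> = F n \<oplus> finsum R F {..<n}"
    using Fc by (intro finsum_insert) auto
  also have "F n = \<ominus> (q n \<otimes> (\<sigma> ^^ n) c)"
    using m q c by (simp add: F_def cyc_poly_def r_minus)
  also have "finsum R F {..<n} = (if m \<le> n then q (n - m) else \<zero>)"
  proof (cases "m \<le> n")
    case True
    have "finsum R F {..<n} = finsum R F (insert (n - m) ({..<n} - {n - m}))"
      using True m by (intro arg_cong[where f = "finsum R F"]) auto
    also have "\<dots> = F (n - m) \<oplus> finsum R F ({..<n} - {n - m})"
      using Fc by (intro finsum_insert) auto
    also have "finsum R F ({..<n} - {n - m}) = finsum R (\<lambda>i. \<zero>) ({..<n} - {n - m})"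
      by (intro finsum_cong') (use q c in \<open>auto simp: F_def cyc_poly_def\<close>)
    also have "\<dots> = \<zero>" by (simp add: finsum_zero)
    also have "F (n - m) = q (n - m)" using True m q by (simp add: F_def cyc_poly_def)
    finally show ?thesis using True q by simp
  next
    case False
    have "finsum R F {..<n} = finsum R (\<lambda>i. \<zero>) {..<n}"
      by (intro finsum_cong') (use q c False in \<open>auto simp: F_def cyc_poly_def\<close>)
    also have "\<dots> = \<zero>" by (simp add: finsum_zero)
    finally show ?thesis using False by simp
  qed
  finally show ?thesis using q c by (simp add: a_comm)
qed

lemma rem_unique:
  assumes c: "c \<in> carrier R" and m: "0 < m"
    and q: "q \<in> spoly R" and r: "r \<in> spoly R" and rm: "\<forall>i\<ge>m. r i = \<zero>"
    and g: "g = padd R (skew_mult R \<sigma> q (cyc_poly R m c)) r"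
  shows "right_rem R \<sigma> g (cyc_poly R m c) = r"
  unfolding right_rem_def
proof (rule the_equality)
  have rc: "\<And>i. r i \<in> carrier R" using r by (simp add: spoly_def)
  have qc: "\<And>i. q i \<in> carrier R" using q by (simp add: spoly_def)
  show "r \<in> spoly R \<and> (\<forall>i\<ge>sdeg R (cyc_poly R m c). r i = \<zero>) \<and>
        (\<exists>q\<in>spoly R. g = padd R (skew_mult R \<sigma> q (cyc_poly R m c)) r)"
  proof (intro conjI)
    show "\<forall>i\<ge>sdeg R (cyc_poly R m c). r i = \<zero>"
    proof (cases "\<one> = \<zero>")
      case True thus ?thesis using triv_zero rc by blast
    next
      case False thus ?thesis using sdeg_cyc rm by simp
    qed
  qed (use r q g in auto)
  fix r' assume "r' \<in> spoly R \<and> (\<forall>i\<ge>sdeg R (cyc_poly R m c). r' i = \<zero>) \<and>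
        (\<exists>q\<in>spoly R. g = padd R (skew_mult R \<sigma> q (cyc_poly R m c)) r')"
  then obtain q' where r': "r' \<in> spoly R" "\<forall>i\<ge>sdeg R (cyc_poly R m c). r' i = \<zero>"
    and q': "q' \<in> spoly R" and g': "g = padd R (skew_mult R \<sigma> q' (cyc_poly R m c)) r'" by blast
  have rc': "\<And>i. r' i \<in> carrier R" using r' by (simp add: spoly_def)
  have qc': "\<And>i. q' i \<in> carrier R" using q' by (simp add: spoly_def)
  show "r' = r"
  proof (cases "\<one> = \<zero>")
    case True thus ?thesis using triv_zero rc rc' by (intro ext) metis
  next
    case False
    hence rm': "\<forall>i\<ge>m. r' i = \<zero>" using r' sdeg_cyc by simp
    define Q where "Q = (\<lambda>q n. (if m \<le> n then q (n - m) else \<zero>) \<oplus> \<ominus> (q n \<otimes> (\<sigma> ^^ n) c))"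
    have Qc: "\<And>q n. (\<And>i. q i \<in> carrier R) \<Longrightarrow> Q q n \<in> carrier R" using c unfolding Q_def by auto
    have eq: "\<And>n. Q q n \<oplus> r n = Q q' n \<oplus> r' n"
    proof -
      fix n
      have "g n = Q q n \<oplus> r n" using g skew_mult_cyc[OF qc c m] by (simp add: padd_def Q_def)
      moreover have "g n = Q q' n \<oplus> r' n" using g' skew_mult_cyc[OF qc' c m] by (simp add: padd_def Q_def)
      ultimately show "Q q n \<oplus> r n = Q q' n \<oplus> r' n" by simp
    qed
    define D where "D = (\<lambda>k. q k \<ominus> q' k)"
    have rec: "\<And>k. D k = D (k + m) \<otimes> (\<sigma> ^^ (k + m)) c"
    proof -
      fix k
      have "Q q (k + m) = Q q' (k + m)" using eq[of "k+m"] rm rm' Qc qc qc' by simp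
      hence e: "q k \<oplus> \<ominus> (q (k+m) \<otimes> (\<sigma> ^^ (k+m)) c) = q' k \<oplus> \<ominus> (q' (k+m) \<otimes> (\<sigma> ^^ (k+m)) c)"
        by (simp add: Q_def)
      have s: "(\<sigma> ^^ (k+m)) c \<in> carrier R" using c by simp
      have a: "q k \<in> carrier R" "q' k \<in> carrier R" "q (k+m) \<in> carrier R" "q' (k+m) \<in> carrier R" using qc qc' by auto
      define x where "x = q (k+m) \<otimes> (\<sigma> ^^ (k+m)) c"
      define x' where "x' = q' (k+m) \<otimes> (\<sigma> ^^ (k+m)) c"
      have xc: "x \<in> carrier R" "x' \<in> carrier R" using a s by (auto simp: x_def x'_def)
      have e': "q k \<oplus> \<ominus> x = q' k \<oplus> \<ominus> x'" using e by (simp add: x_def x'_def)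
      have "D k = ((q k \<oplus> \<ominus> x) \<oplus> x) \<ominus> q' k" unfolding D_def using a xc by algebra
      also have "\<dots> = ((q' k \<oplus> \<ominus> x') \<oplus> x) \<ominus> q' k" using e' by simp
      also have "\<dots> = D (k + m) \<otimes> (\<sigma> ^^ (k + m)) c" unfolding D_def x_def x'_def using a s by algebra
      finally show "D k = D (k + m) \<otimes> (\<sigma> ^^ (k + m)) c" .
    qed
    obtain B where B: "\<forall>i>B. q i = \<zero>" using spoly_bound[OF q] by blast
    obtain B' where B': "\<forall>i>B'. q' i = \<zero>" using spoly_bound[OF q'] by blast
    have D0: "D k = \<zero>" for k
    proof (induct k rule: measure_induct_rule[where f = "\<lambda>k. Suc (max B B') - k"])
      case (less k)
      show ?case
      proof (cases "k > max B B'")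
        case True thus ?thesis using B B' by (simp add: D_def a_minus_def)
      next
        case False
        hence "k \<le> max B B'" by (simp add: not_less le_max_iff_disj)
        hence "Suc (max B B') - (k + m) < Suc (max B B') - k" using m by arith
        hence "D (k + m) = \<zero>" by (rule less)
        thus ?thesis using rec[of k] c by simp
      qed
    qed
    have "q = q'"
    proof
      fix k show "q k = q' k" using D0[of k] qc qc' unfolding D_def
        by (metis a_minus_def add.inv_closed add.inv_inv minus_equality r_neg1 r_neg)
    qed
    show "r' = r"
    proof
      fix n
      have "Q q n \<oplus> r n = Q q n \<oplus> r' n" using eq \<open>q = q'\<close> by simp
      thus "r' n = r n" using Qc[OF qc] rc rc' by simp
    qed
  qed
qed

lemma zero_case:
  assumes c: "c \<in> carrier R" and m: "0 < m" and g: "g \<in> spoly R" and gm: "\<forall>i\<ge>m. g i = \<zero>"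
  shows "\<exists>q\<in>spoly R. \<exists>r\<in>spoly R. (\<forall>i\<ge>m. r i = \<zero>) \<and> g = padd R (skew_mult R \<sigma> q (cyc_poly R m c)) r"
proof -
  have gc: "\<And>i. g i \<in> carrier R" using g by (simp add: spoly_def)
  have 1: "pzero R \<in> spoly R" by (simp add: spoly_def pzero_def)
  have 2: "g = padd R (skew_mult R \<sigma> (pzero R) (cyc_poly R m c)) g"
  proof
    fix n show "g n = padd R (skew_mult R \<sigma> (pzero R) (cyc_poly R m c)) g n"
      using skew_mult_cyc[of "pzero R" c m n] c m gc by (simp add: pzero_def padd_def)
  qed
  show ?thesis using 1 2 g gm by blast
qed

lemma rem_exists:
  assumes c: "c \<in> carrier R" and m: "0 < m" and g: "g \<in> spoly R"
  shows "\<exists>q\<in>spoly R. \<exists>r\<in>spoly R. (\<forall>i\<ge>m. r i = \<zero>) \<and> g = padd R (skew_mult R \<sigma> q (cyc_poly R m c)) r"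
proof -
  have main: "\<forall>g. g \<in> spoly R \<longrightarrow> (\<forall>i\<ge>N. g i = \<zero>) \<longrightarrow>
     (\<exists>q\<in>spoly R. \<exists>r\<in>spoly R. (\<forall>i\<ge>m. r i = \<zero>) \<and> g = padd R (skew_mult R \<sigma> q (cyc_poly R m c)) r)" for N
  proof (induct N)
    case 0 thus ?case using zero_case[OF c m] by auto
  next
    case (Suc N)
    show ?case
    proof (intro allI impI)
      fix g assume g: "g \<in> spoly R" and gN: "\<forall>i\<ge>Suc N. g i = \<zero>"
      have gc: "\<And>i. g i \<in> carrier R" using g by (simp add: spoly_def)
      show "\<exists>q\<in>spoly R. \<exists>r\<in>spoly R. (\<forall>i\<ge>m. r i = \<zero>) \<and> g = padd R (skew_mult R \<sigma> q (cyc_poly R m c)) r"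
      proof (cases "N < m")
        case True thus ?thesis using zero_case[OF c m g] gN by auto
      next
        case False
        define k where "k = N - m"
        have kN: "k < N" "k + m = N" "N - m = k" using False m by (auto simp: k_def)
        define a where "a = g N"
        have ac: "a \<in> carrier R" using gc by (simp add: a_def)
        define g' where "g' = (\<lambda>n. if n = N then \<zero> else if n = k then g k \<oplus> a \<otimes> (\<sigma> ^^ k) c else g n)"
        have g'c: "\<And>i. g' i \<in> carrier R" using gc ac c by (simp add: g'_def)
        have g'sp: "g' \<in> spoly R"
          by (rule spolyI[of _ N]) (use g'c gN kN in \<open>auto simp: g'_def\<close>)
        have g'N: "\<forall>i\<ge>N. g' i = \<zero>" using gN kN by (auto simp: g'_def)
        obtain q' r' where q': "q' \<in> spoly R" and r': "r' \<in> spoly R" "\<forall>i\<ge>m. r' i = \<zero>"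
          and eq': "g' = padd R (skew_mult R \<sigma> q' (cyc_poly R m c)) r'"
          using Suc.hyps g'sp g'N by blast
        have qc': "\<And>i. q' i \<in> carrier R" using q' by (simp add: spoly_def)
        have rc': "\<And>i. r' i \<in> carrier R" using r' by (simp add: spoly_def)
        define q where "q = q'(k := q' k \<oplus> a)"
        have qc: "\<And>i. q i \<in> carrier R" using qc' ac by (simp add: q_def)
        obtain B where B: "\<forall>i>B. q' i = \<zero>" using spoly_bound[OF q'] by blast
        have qsp: "q \<in> spoly R"
          by (rule spolyI[of _ "max B k"]) (use qc B in \<open>auto simp: q_def\<close>)
        define Q where "Q = (\<lambda>q n. (if m \<le> n then q (n - m) else \<zero>) \<oplus> \<ominus> (q n \<otimes> (\<sigma> ^^ n) c))"
        have Qc: "\<And>q n. (\<And>i. q i \<in> carrier R) \<Longrightarrow> Q q n \<in> carrier R" using c unfolding Q_def by auto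
        have g'eq: "g' n = Q q' n \<oplus> r' n" for n
          using eq' skew_mult_cyc[OF qc' c m] by (simp add: padd_def Q_def)
        have "g = padd R (skew_mult R \<sigma> q (cyc_poly R m c)) r'"
        proof
          fix n
          have lhs: "padd R (skew_mult R \<sigma> q (cyc_poly R m c)) r' n = Q q n \<oplus> r' n"
            using skew_mult_cyc[OF qc c m] by (simp add: padd_def Q_def)
          have s: "(\<sigma> ^^ n) c \<in> carrier R" using c by simp
          show "g n = padd R (skew_mult R \<sigma> q (cyc_poly R m c)) r' n"
          proof (cases "n = N")
            case True
            have nk: "n \<noteq> k" using kN True by simp
            have "Q q n \<oplus> r' n = (Q q' n \<oplus> r' n) \<oplus> a"
              unfolding Q_def q_def using True kN nk qc' rc' ac s
              by simp algebra
            also have "Q q' n \<oplus> r' n = \<zero>" using g'eq[of n] True by (simp add: g'_def)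
            finally show ?thesis using lhs ac True by (simp add: a_def)
          next
            case False
            show ?thesis
            proof (cases "n = k")
              case True
              have "m \<le> n \<Longrightarrow> n - m \<noteq> k" using True m by simp
              hence "Q q n = Q q' n \<oplus> \<ominus> (a \<otimes> (\<sigma> ^^ n) c)"
                unfolding Q_def q_def using True qc' ac s
                by (cases "m \<le> n") (simp, algebra, simp, algebra)
              hence "Q q n \<oplus> r' n = (Q q' n \<oplus> r' n) \<oplus> \<ominus> (a \<otimes> (\<sigma> ^^ n) c)"
                using Qc[OF qc'] rc' ac s by (simp add: a_ac)
              also have "Q q' n \<oplus> r' n = g n \<oplus> a \<otimes> (\<sigma> ^^ n) c"
                using g'eq[of n] True False by (simp add: g'_def)
              finally have "Q q n \<oplus> r' n = g n" using gc ac s by (simp add: a_assoc r_neg)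
              thus ?thesis using lhs by simp
            next
              case False2: False
              have "m \<le> n \<Longrightarrow> n - m \<noteq> k" using \<open>n \<noteq> N\<close> kN by auto
              hence "Q q n = Q q' n" unfolding Q_def q_def using False2 by auto
              moreover have "g' n = g n" using \<open>n \<noteq> N\<close> False2 by (simp add: g'_def)
              ultimately show ?thesis using lhs g'eq[of n] by simp
            qed
          qed
        qed
        thus ?thesis using qsp r' by blast
      qed
    qed
  qed
  obtain B where "\<forall>i>B. g i = \<zero>" using spoly_bound[OF g] by blast
  hence "\<forall>i\<ge>Suc B. g i = \<zero>" by auto
  thus ?thesis using main g by blast
qed

lemma skew_mult_spoly:
  assumes p: "p \<in> spoly R" and q: "q \<in> spoly R"
  shows "skew_mult R \<sigma> p q \<in> spoly R"
proof -
  have pc: "\<And>i. p i \<in> carrier R" using p by (simp add: spoly_def)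
  have qc: "\<And>i. q i \<in> carrier R" using q by (simp add: spoly_def)
  obtain Bp where Bp: "\<forall>i>Bp. p i = \<zero>" using spoly_bound[OF p] by blast
  obtain Bq where Bq: "\<forall>i>Bq. q i = \<zero>" using spoly_bound[OF q] by blast
  show ?thesis
  proof (rule spolyI[of _ "Bp + Bq"])
    show "\<And>i. skew_mult R \<sigma> p q i \<in> carrier R" using skew_mult_closed pc qc by blast
    fix n assume n: "n > Bp + Bq"
    have "skew_mult R \<sigma> p q n = finsum R (\<lambda>i. \<zero>) {..n}"
      unfolding skew_mult_def
    proof (intro finsum_cong')
      fix i assume "i \<in> {..n}"
      show "p i \<otimes> (\<sigma> ^^ i) (q (n - i)) = \<zero>"
      proof (cases "i > Bp")
        case True thus ?thesis using Bp qc by simp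
      next
        case False hence "n - i > Bq" using n by simp
        thus ?thesis using Bq pc by simp
      qed
    qed auto
    thus "skew_mult R \<sigma> p q n = \<zero>" by (simp add: finsum_zero)
  qed
qed

end

lemma skew_mult_hom:
  assumes R: "cring R" and S: "cring S" and h: "h \<in> ring_hom R S" and sig: "\<sigma> \<in> ring_hom R R"
    and tau: "\<forall>x\<in>carrier R. \<tau> (h x) = h (\<sigma> x)"
    and p: "\<And>i. p i \<in> carrier R" and q: "\<And>i. q i \<in> carrier R"
  shows "h (skew_mult R \<sigma> p q n) = skew_mult S \<tau> (\<lambda>i. h (p i)) (\<lambda>i. h (q i)) n"
proof -
  interpret H: ring_hom_cring R S h by (rule hom_crI[OF R S h])
  interpret K: skew R \<sigma> by (intro skew.intro skew_axioms.intro R sig)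
  have tp: "(\<tau> ^^ i) (h x) = h ((\<sigma> ^^ i) x)" if "x \<in> carrier R" for x i
    using that by (induct i) (auto simp: tau)
  have "h (skew_mult R \<sigma> p q n) = finsum S (h \<circ> (\<lambda>i. p i \<otimes>\<^bsub>R\<^esub> (\<sigma> ^^ i) (q (n - i)))) {..n}"
    unfolding skew_mult_def using p q by (intro H.hom_finsum) auto
  also have "\<dots> = skew_mult S \<tau> (\<lambda>i. h (p i)) (\<lambda>i. h (q i)) n"
    unfolding skew_mult_def by (intro H.S.finsum_cong') (use p q tp in auto)
  finally show ?thesis .
qed



context cring
begin

lemma petit_carrier_cyc:
  assumes "c \<in> carrier R"
  shows "petit_carrier R (cyc_poly R m c) = {p \<in> spoly R. \<forall>i\<ge>m. p i = \<zero>}"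
proof (cases "\<one> = \<zero>")
  case True
  have "\<And>p i. p \<in> spoly R \<Longrightarrow> p i = \<zero>" using triv_zero[OF True] by (auto simp: spoly_def)
  thus ?thesis unfolding petit_carrier_def by auto
next
  case False thus ?thesis unfolding petit_carrier_def using sdeg_cyc by simp
qed

end

locale skew_ideal = skew R \<sigma> for R (structure) and \<sigma> + fixes J m d
  assumes J: "ideal J R" and sigJ: "\<forall>x\<in>J. \<sigma> x \<in> J" and per: "\<forall>x\<in>carrier R. (\<sigma> ^^ m) x = x"
    and m: "0 < m" and d: "d \<in> carrier R"
begin

lemma Jadd: "additive_subgroup J R" using J by (rule ideal.axioms(1))
lemma Jsub: "J \<subseteq> carrier R" using additive_subgroup.a_subset[OF Jadd] .
lemma J0: "\<zero> \<in> J" using additive_subgroup.zero_closed[OF Jadd] .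
lemma Jplus: "x \<in> J \<Longrightarrow> y \<in> J \<Longrightarrow> x \<oplus> y \<in> J" using additive_subgroup.a_closed[OF Jadd] .
lemma Jneg: "x \<in> J \<Longrightarrow> \<ominus> x \<in> J" using additive_subgroup.a_inv_closed[OF Jadd] .

lemma qcring: "cring (R Quot J)" using ideal.quotient_is_cring[OF J is_cring] .
lemma hhom: "a_r_coset R J \<in> ring_hom R (R Quot J)" using ideal.rcos_ring_hom[OF J] .

sublocale H: ring_hom_cring R "R Quot J" "a_r_coset R J"
  by (rule hom_crI[OF is_cring qcring hhom])

lemma h_eq: "x \<in> carrier R \<Longrightarrow> y \<in> carrier R \<Longrightarrow> (J +> x = J +> y) \<longleftrightarrow> x \<ominus> y \<in> J"
  using quotient_eq_iff_same_a_r_cos[OF J] by blast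

lemma h_J: "x \<in> carrier R \<Longrightarrow> (J +> x = \<zero>\<^bsub>R Quot J\<^esub>) \<longleftrightarrow> x \<in> J"
proof -
  assume x: "x \<in> carrier R"
  have "\<zero>\<^bsub>R Quot J\<^esub> = J +> \<zero>" using H.hom_zero by simp
  thus ?thesis using h_eq[OF x zero_closed] x by (simp add: a_minus_def)
qed

lemma carrQ: "carrier (R Quot J) = (\<lambda>x. J +> x) ` carrier R"
proof -
  have "carrier (R Quot J) = a_rcosets J" by (simp only: FactRing_def partial_object.select_convs)
  also have "\<dots> = (\<Union>a\<in>carrier R. {J +> a})" by (simp only: A_RCOSETS_def')
  also have "\<dots> = (\<lambda>x. J +> x) ` carrier R" by blast
  finally show ?thesis .
qed

lemma sigJ_pow: "x \<in> J \<Longrightarrow> (\<sigma> ^^ i) x \<in> J"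
  by (induct i) (auto simp: sigJ)

lemma sig_hc: "ring_hom_cring R R \<sigma>" by (rule hom_crI[OF is_cring is_cring sig])

lemma sb_h: "x \<in> carrier R \<Longrightarrow> sigma_bar R J \<sigma> (J +> x) = J +> \<sigma> x"
proof -
  interpret SG: ring_hom_cring R R \<sigma> by (rule sig_hc)
  assume x: "x \<in> carrier R"
  have asg: "abelian_subgroup J R" using abelian_subgroupI3[OF Jadd is_abelian_group] .
  have "x \<in> J +> x" using abelian_subgroup.a_rcos_self[OF asg x] .
  hence u: "(SOME u. u \<in> J +> x) \<in> J +> x" by (rule someI)
  then obtain j where j: "j \<in> J" "(SOME u. u \<in> J +> x) = j \<oplus> x" by (auto simp: a_r_coset_def')
  have jc: "j \<in> carrier R" using j Jsub by auto
  have sj: "\<sigma> j \<in> carrier R" "\<sigma> x \<in> carrier R" using jc x by auto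
  have "\<sigma> (j \<oplus> x) \<ominus> \<sigma> x = \<sigma> j \<oplus> \<sigma> x \<ominus> \<sigma> x" using jc x by simp
  also have "\<dots> = \<sigma> j" using sj by algebra
  finally have "\<sigma> (j \<oplus> x) \<ominus> \<sigma> x = \<sigma> j" .
  hence "\<sigma> (j \<oplus> x) \<ominus> \<sigma> x \<in> J" using sigJ j by simp
  moreover have "\<sigma> (j \<oplus> x) \<in> carrier R" using jc x by simp
  ultimately have "J +> \<sigma> (j \<oplus> x) = J +> \<sigma> x" using h_eq sj(2) by blast
  thus ?thesis unfolding sigma_bar_def using j by simp
qed

lemma sb_hom: "sigma_bar R J \<sigma> \<in> ring_hom (R Quot J) (R Quot J)"
proof (rule ring_hom_memI)
  interpret SG: ring_hom_cring R R \<sigma> by (rule sig_hc)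
  fix X assume "X \<in> carrier (R Quot J)"
  then obtain x where x: "x \<in> carrier R" "X = J +> x" using carrQ by auto
  show "sigma_bar R J \<sigma> X \<in> carrier (R Quot J)" using x sb_h by simp
  fix Y assume "Y \<in> carrier (R Quot J)"
  then obtain y where y: "y \<in> carrier R" "Y = J +> y" using carrQ by auto
  have e1: "X \<otimes>\<^bsub>R Quot J\<^esub> Y = J +> (x \<otimes> y)" using x y by simp
  have "sigma_bar R J \<sigma> (X \<otimes>\<^bsub>R Quot J\<^esub> Y) = J +> \<sigma> (x \<otimes> y)"
    unfolding e1 by (rule sb_h) (use x y in simp)
  thus "sigma_bar R J \<sigma> (X \<otimes>\<^bsub>R Quot J\<^esub> Y) = sigma_bar R J \<sigma> X \<otimes>\<^bsub>R Quot J\<^esub> sigma_bar R J \<sigma> Y"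
    using x y sb_h by simp
  have e2: "X \<oplus>\<^bsub>R Quot J\<^esub> Y = J +> (x \<oplus> y)" using x y by simp
  have "sigma_bar R J \<sigma> (X \<oplus>\<^bsub>R Quot J\<^esub> Y) = J +> \<sigma> (x \<oplus> y)"
    unfolding e2 by (rule sb_h) (use x y in simp)
  thus "sigma_bar R J \<sigma> (X \<oplus>\<^bsub>R Quot J\<^esub> Y) = sigma_bar R J \<sigma> X \<oplus>\<^bsub>R Quot J\<^esub> sigma_bar R J \<sigma> Y"
    using x y sb_h by simp
next
  interpret SG: ring_hom_cring R R \<sigma> by (rule sig_hc)
  have e: "\<one>\<^bsub>R Quot J\<^esub> = J +> \<one>" by simp
  have "sigma_bar R J \<sigma> \<one>\<^bsub>R Quot J\<^esub> = J +> \<sigma> \<one>" unfolding e by (rule sb_h) simp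
  thus "sigma_bar R J \<sigma> \<one>\<^bsub>R Quot J\<^esub> = \<one>\<^bsub>R Quot J\<^esub>" by simp
qed

lemma sb_inj: "inj_on (sigma_bar R J \<sigma>) (carrier (R Quot J))"
proof (rule inj_onI)
  interpret SG: ring_hom_cring R R \<sigma> by (rule sig_hc)
  fix X Y assume "X \<in> carrier (R Quot J)" "Y \<in> carrier (R Quot J)"
    and eq: "sigma_bar R J \<sigma> X = sigma_bar R J \<sigma> Y"
  then obtain x y where x: "x \<in> carrier R" "X = J +> x" and y: "y \<in> carrier R" "Y = J +> y"
    using carrQ by auto
  have sx: "\<sigma> x \<in> carrier R" "\<sigma> y \<in> carrier R" using x y by auto
  have "J +> \<sigma> x = sigma_bar R J \<sigma> X" using sb_h[OF x(1)] x(2) by simp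
  also have "\<dots> = sigma_bar R J \<sigma> Y" by (rule eq)
  also have "\<dots> = J +> \<sigma> y" using sb_h[OF y(1)] y(2) by simp
  finally have "\<sigma> x \<ominus> \<sigma> y \<in> J" using h_eq[OF sx] by blast
  moreover have "\<sigma> x \<ominus> \<sigma> y = \<sigma> (x \<ominus> y)" using x y by (simp add: a_minus_def)
  ultimately have sJ: "\<sigma> (x \<ominus> y) \<in> J" by simp
  obtain k where k: "m = Suc k" using m by (cases m) auto
  have "(\<sigma> ^^ m) (x \<ominus> y) = (\<sigma> ^^ k) (\<sigma> (x \<ominus> y))"
    by (simp only: k funpow_Suc_right comp_apply)
  also have "\<dots> \<in> J" by (rule sigJ_pow[OF sJ])
  finally have "(\<sigma> ^^ m) (x \<ominus> y) \<in> J" .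
  moreover have "(\<sigma> ^^ m) (x \<ominus> y) = x \<ominus> y" using per x y by simp
  ultimately have "x \<ominus> y \<in> J" by simp
  thus "X = Y" using h_eq x y by simp
qed

lemma red_spoly: "p \<in> spoly R \<Longrightarrow> reduce_coeffs R J p \<in> spoly (R Quot J)"
proof -
  assume p: "p \<in> spoly R"
  have "{i. J +> p i \<noteq> \<zero>\<^bsub>R Quot J\<^esub>} \<subseteq> {i. p i \<noteq> \<zero>}" by auto
  thus ?thesis using p unfolding spoly_def reduce_coeffs_def by (auto intro: finite_subset)
qed

lemma red_f: "reduce_coeffs R J (cyc_poly R m d) = cyc_poly (R Quot J) m (J +> d)"
proof
  fix i show "reduce_coeffs R J (cyc_poly R m d) i = cyc_poly (R Quot J) m (J +> d) i"
    unfolding reduce_coeffs_def cyc_poly_def by (cases "i = m"; cases "i = 0") (use d in simp_all)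
qed

sublocale Q: skew "R Quot J" "sigma_bar R J \<sigma>"
  by (intro skew.intro skew_axioms.intro qcring sb_hom)

lemma dQ: "J +> d \<in> carrier (R Quot J)" using d by simp

lemma red_mult:
  assumes p: "p \<in> spoly R" and q: "q \<in> spoly R"
  shows "petit_mult R \<sigma> (cyc_poly R m d) p q \<in> petit_carrier R (cyc_poly R m d)
   \<and> reduce_coeffs R J (petit_mult R \<sigma> (cyc_poly R m d) p q)
     = petit_mult (R Quot J) (sigma_bar R J \<sigma>) (cyc_poly (R Quot J) m (J +> d)) (reduce_coeffs R J p) (reduce_coeffs R J q)"
proof -
  have pc: "\<And>i. p i \<in> carrier R" using p by (simp add: spoly_def)
  have qc: "\<And>i. q i \<in> carrier R" using q by (simp add: spoly_def)
  define g where "g = skew_mult R \<sigma> p q"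
  have g: "g \<in> spoly R" unfolding g_def using skew_mult_spoly[OF p q] .
  obtain q0 r0 where q0: "q0 \<in> spoly R" and r0: "r0 \<in> spoly R" "\<forall>i\<ge>m. r0 i = \<zero>"
    and geq: "g = padd R (skew_mult R \<sigma> q0 (cyc_poly R m d)) r0"
    using rem_exists[OF d m g] by blast
  have q0c: "\<And>i. q0 i \<in> carrier R" using q0 by (simp add: spoly_def)
  have r0c: "\<And>i. r0 i \<in> carrier R" using r0 by (simp add: spoly_def)
  have fc: "\<And>i. cyc_poly R m d i \<in> carrier R" using d by (simp add: cyc_poly_def)
  have pm: "petit_mult R \<sigma> (cyc_poly R m d) p q = r0"
    unfolding petit_mult_def g_def[symmetric] by (rule rem_unique[OF d m q0 r0 geq])
  have tau: "\<forall>x\<in>carrier R. sigma_bar R J \<sigma> (J +> x) = J +> \<sigma> x" using sb_h by blast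
  have hom: "\<And>a b n. (\<And>i. a i \<in> carrier R) \<Longrightarrow> (\<And>i. b i \<in> carrier R) \<Longrightarrow>
      J +> skew_mult R \<sigma> a b n = skew_mult (R Quot J) (sigma_bar R J \<sigma>) (\<lambda>i. J +> a i) (\<lambda>i. J +> b i) n"
    by (rule skew_mult_hom[OF is_cring qcring hhom sig tau])
  have "reduce_coeffs R J g = padd (R Quot J) (skew_mult (R Quot J) (sigma_bar R J \<sigma>) (reduce_coeffs R J q0) (cyc_poly (R Quot J) m (J +> d))) (reduce_coeffs R J r0)"
  proof
    fix n
    have "reduce_coeffs R J g n = J +> (skew_mult R \<sigma> q0 (cyc_poly R m d) n \<oplus> r0 n)"
      using geq by (simp add: reduce_coeffs_def padd_def)
    also have "\<dots> = (J +> skew_mult R \<sigma> q0 (cyc_poly R m d) n) \<oplus>\<^bsub>R Quot J\<^esub> (J +> r0 n)"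
      using skew_mult_closed[OF q0c fc] r0c by simp
    also have "J +> skew_mult R \<sigma> q0 (cyc_poly R m d) n = skew_mult (R Quot J) (sigma_bar R J \<sigma>) (reduce_coeffs R J q0) (reduce_coeffs R J (cyc_poly R m d)) n"
      using hom[OF q0c fc] by (simp add: reduce_coeffs_def)
    finally show "reduce_coeffs R J g n = padd (R Quot J) (skew_mult (R Quot J) (sigma_bar R J \<sigma>) (reduce_coeffs R J q0) (cyc_poly (R Quot J) m (J +> d))) (reduce_coeffs R J r0) n"
      using red_f[unfolded reduce_coeffs_def] by (simp add: padd_def reduce_coeffs_def)
  qed
  moreover have "reduce_coeffs R J g = skew_mult (R Quot J) (sigma_bar R J \<sigma>) (reduce_coeffs R J p) (reduce_coeffs R J q)"
    unfolding g_def reduce_coeffs_def using hom[OF pc qc] by auto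
  ultimately have eq2: "skew_mult (R Quot J) (sigma_bar R J \<sigma>) (reduce_coeffs R J p) (reduce_coeffs R J q) = padd (R Quot J) (skew_mult (R Quot J) (sigma_bar R J \<sigma>) (reduce_coeffs R J q0) (cyc_poly (R Quot J) m (J +> d))) (reduce_coeffs R J r0)"
    by simp
  have r0z: "\<forall>i\<ge>m. reduce_coeffs R J r0 i = \<zero>\<^bsub>R Quot J\<^esub>" using r0 by (simp add: reduce_coeffs_def)
  have "petit_mult (R Quot J) (sigma_bar R J \<sigma>) (cyc_poly (R Quot J) m (J +> d)) (reduce_coeffs R J p) (reduce_coeffs R J q) = reduce_coeffs R J r0"
    unfolding petit_mult_def by (rule Q.rem_unique[OF dQ m red_spoly[OF q0] red_spoly[OF r0(1)] r0z eq2])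
  moreover have "r0 \<in> petit_carrier R (cyc_poly R m d)" using petit_carrier_cyc[OF d] r0 by simp
  ultimately show ?thesis using pm by simp
qed


abbreviation "Lam \<equiv> petit_carrier R (cyc_poly R m d)"
abbreviation "ILam \<equiv> {p \<in> Lam. \<forall>i. p i \<in> J}"
abbreviation "red \<equiv> reduce_coeffs R J"
abbreviation "fb \<equiv> cyc_poly (R Quot J) m (J +> d)"
abbreviation "sb \<equiv> sigma_bar R J \<sigma>"

lemma lam: "Lam = {p \<in> spoly R. \<forall>i\<ge>m. p i = \<zero>}" using petit_carrier_cyc[OF d] .
lemma lamQ: "petit_carrier (R Quot J) fb = {P \<in> spoly (R Quot J). \<forall>i\<ge>m. P i = \<zero>\<^bsub>R Quot J\<^esub>}"
  using cring.petit_carrier_cyc[OF qcring dQ] .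

lemma lam_c: "p \<in> Lam \<Longrightarrow> p i \<in> carrier R" using lam by (auto simp: spoly_def)

lemma lam_add: "p \<in> Lam \<Longrightarrow> q \<in> Lam \<Longrightarrow> padd R p q \<in> Lam"
proof -
  assume p: "p \<in> Lam" and q: "q \<in> Lam"
  have "padd R p q \<in> spoly R"
    by (rule spolyI[of _ m]) (use p q lam_c lam in \<open>auto simp: padd_def\<close>)
  thus ?thesis using p q lam by (auto simp: padd_def)
qed

lemma lam_neg: "p \<in> Lam \<Longrightarrow> pneg R p \<in> Lam"
proof -
  assume p: "p \<in> Lam"
  have "pneg R p \<in> spoly R"
    by (rule spolyI[of _ m]) (use p lam_c lam in \<open>auto simp: pneg_def\<close>)
  thus ?thesis using p lam by (auto simp: pneg_def)
qed

lemma lam_zero: "pzero R \<in> Lam" using lam by (auto simp: spoly_def pzero_def)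

lemma ilam_iff: "r \<in> Lam \<Longrightarrow> r \<in> ILam \<longleftrightarrow> red r = pzero (R Quot J)"
  using h_J lam_c by (auto simp: reduce_coeffs_def pzero_def fun_eq_iff)

lemma skew_mult_zero_r: "(\<And>i. P i \<in> carrier (R Quot J)) \<Longrightarrow> skew_mult (R Quot J) sb P (pzero (R Quot J)) = pzero (R Quot J)"
proof
  fix n assume P: "\<And>i. P i \<in> carrier (R Quot J)"
  have "skew_mult (R Quot J) sb P (pzero (R Quot J)) n = finsum (R Quot J) (\<lambda>i. \<zero>\<^bsub>R Quot J\<^esub>) {..n}"
    unfolding skew_mult_def by (intro H.S.finsum_cong') (use P in \<open>auto simp: pzero_def\<close>)
  thus "skew_mult (R Quot J) sb P (pzero (R Quot J)) n = pzero (R Quot J) n"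
    by (simp add: H.S.finsum_zero pzero_def)
qed

lemma skew_mult_zero_l: "(\<And>i. P i \<in> carrier (R Quot J)) \<Longrightarrow> skew_mult (R Quot J) sb (pzero (R Quot J)) P = pzero (R Quot J)"
proof
  fix n assume P: "\<And>i. P i \<in> carrier (R Quot J)"
  have "skew_mult (R Quot J) sb (pzero (R Quot J)) P n = finsum (R Quot J) (\<lambda>i. \<zero>\<^bsub>R Quot J\<^esub>) {..n}"
    unfolding skew_mult_def by (intro H.S.finsum_cong') (use P in \<open>auto simp: pzero_def\<close>)
  thus "skew_mult (R Quot J) sb (pzero (R Quot J)) P n = pzero (R Quot J) n"
    by (simp add: H.S.finsum_zero pzero_def)
qed

lemma fbc: "\<And>i. fb i \<in> carrier (R Quot J)" using dQ by (simp add: cyc_poly_def)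

lemma rem_zeroQ: "right_rem (R Quot J) sb (pzero (R Quot J)) fb = pzero (R Quot J)"
proof (rule Q.rem_unique[OF dQ m])
  show "pzero (R Quot J) \<in> spoly (R Quot J)" by (simp add: spoly_def pzero_def)
  thus "pzero (R Quot J) \<in> spoly (R Quot J)" .
  show "\<forall>i\<ge>m. pzero (R Quot J) i = \<zero>\<^bsub>R Quot J\<^esub>" by (simp add: pzero_def)
  show "pzero (R Quot J) = padd (R Quot J) (skew_mult (R Quot J) sb (pzero (R Quot J)) fb) (pzero (R Quot J))"
    using skew_mult_zero_l[OF fbc] by (simp add: padd_def pzero_def fun_eq_iff)
qed

lemma red_c: "p \<in> Lam \<Longrightarrow> red p i \<in> carrier (R Quot J)"
  using lam_c by (simp add: reduce_coeffs_def)

lemma lam_spoly: "p \<in> Lam \<Longrightarrow> p \<in> spoly R" using lam by auto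

lemma ideal_mult:
  assumes p: "p \<in> Lam" and q: "q \<in> ILam"
  shows "petit_mult R \<sigma> (cyc_poly R m d) p q \<in> ILam \<and> petit_mult R \<sigma> (cyc_poly R m d) q p \<in> ILam"
proof -
  have qL: "q \<in> Lam" using q by simp
  have rq: "red q = pzero (R Quot J)" using ilam_iff[OF qL] q by simp
  have 1: "petit_mult R \<sigma> (cyc_poly R m d) p q \<in> ILam"
  proof -
    note X = red_mult[OF lam_spoly[OF p] lam_spoly[OF qL]]
    have "red (petit_mult R \<sigma> (cyc_poly R m d) p q) = petit_mult (R Quot J) sb fb (red p) (red q)"
      using X by (rule conjunct2)
    also have "\<dots> = right_rem (R Quot J) sb (skew_mult (R Quot J) sb (red p) (pzero (R Quot J))) fb"
      by (simp only: petit_mult_def rq)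
    also have "skew_mult (R Quot J) sb (red p) (pzero (R Quot J)) = pzero (R Quot J)"
      by (rule skew_mult_zero_r) (rule red_c[OF p])
    also have "right_rem (R Quot J) sb (pzero (R Quot J)) fb = pzero (R Quot J)" by (rule rem_zeroQ)
    finally have "red (petit_mult R \<sigma> (cyc_poly R m d) p q) = pzero (R Quot J)" .
    thus ?thesis using ilam_iff conjunct1[OF X] by blast
  qed
  have 2: "petit_mult R \<sigma> (cyc_poly R m d) q p \<in> ILam"
  proof -
    note X = red_mult[OF lam_spoly[OF qL] lam_spoly[OF p]]
    have "red (petit_mult R \<sigma> (cyc_poly R m d) q p) = petit_mult (R Quot J) sb fb (red q) (red p)"
      using X by (rule conjunct2)
    also have "\<dots> = right_rem (R Quot J) sb (skew_mult (R Quot J) sb (pzero (R Quot J)) (red p)) fb"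
      by (simp only: petit_mult_def rq)
    also have "skew_mult (R Quot J) sb (pzero (R Quot J)) (red p) = pzero (R Quot J)"
      by (rule skew_mult_zero_l) (rule red_c[OF p])
    also have "right_rem (R Quot J) sb (pzero (R Quot J)) fb = pzero (R Quot J)" by (rule rem_zeroQ)
    finally have "red (petit_mult R \<sigma> (cyc_poly R m d) q p) = pzero (R Quot J)" .
    thus ?thesis using ilam_iff conjunct1[OF X] by blast
  qed
  show ?thesis using 1 2 by blast
qed

lemma red_image: "red ` Lam = petit_carrier (R Quot J) fb"
proof
  show "red ` Lam \<subseteq> petit_carrier (R Quot J) fb"
    unfolding lamQ using red_spoly lam by (auto simp: reduce_coeffs_def)
  show "petit_carrier (R Quot J) fb \<subseteq> red ` Lam"
  proof
    fix P assume "P \<in> petit_carrier (R Quot J) fb"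
    hence P: "P \<in> spoly (R Quot J)" "\<forall>i\<ge>m. P i = \<zero>\<^bsub>R Quot J\<^esub>" using lamQ by auto
    have Pc: "\<exists>x. x \<in> carrier R \<and> P i = J +> x" for i
    proof -
      have "P i \<in> (\<lambda>x. J +> x) ` carrier R" using P(1) carrQ by (simp add: spoly_def)
      thus ?thesis by blast
    qed
    define p where "p = (\<lambda>i. if i < m then (SOME x. x \<in> carrier R \<and> P i = J +> x) else \<zero>)"
    have pc: "\<And>i. p i \<in> carrier R \<and> (i < m \<longrightarrow> P i = J +> p i)"
      unfolding p_def using someI_ex[OF Pc] by auto
    have "p \<in> spoly R" by (rule spolyI[of _ m]) (use pc in \<open>auto simp: p_def\<close>)
    hence pL: "p \<in> Lam" using lam by (auto simp: p_def)
    have "red p = P"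
    proof
      fix i show "red p i = P i"
        using pc[of i] P(2) by (cases "i < m") (auto simp: reduce_coeffs_def p_def)
    qed
    thus "P \<in> red ` Lam" using pL by blast
  qed
qed

lemma red_eq_iff: "p \<in> Lam \<Longrightarrow> q \<in> Lam \<Longrightarrow> red p = red q \<longleftrightarrow> padd R p (pneg R q) \<in> ILam"
proof -
  assume p: "p \<in> Lam" and q: "q \<in> Lam"
  have "padd R p (pneg R q) \<in> Lam" using lam_add[OF p lam_neg[OF q]] .
  moreover have "red p = red q \<longleftrightarrow> (\<forall>i. p i \<ominus> q i \<in> J)"
    using h_eq lam_c[OF p] lam_c[OF q] by (auto simp: reduce_coeffs_def fun_eq_iff)
  ultimately show ?thesis by (simp add: padd_def pneg_def a_minus_def)
qed

theorem generic:
  assumes A: "A \<subseteq> carrier R"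
  shows "(ILam \<subseteq> Lam \<and> pzero R \<in> ILam
        \<and> (\<forall>p\<in>ILam. \<forall>q\<in>ILam. padd R p q \<in> ILam) \<and> (\<forall>p\<in>ILam. pneg R p \<in> ILam)
        \<and> (\<forall>p\<in>Lam. \<forall>q\<in>ILam. petit_mult R \<sigma> (cyc_poly R m d) p q \<in> ILam \<and> petit_mult R \<sigma> (cyc_poly R m d) q p \<in> ILam))
     \<and> (cring (R Quot J) \<and> sb \<in> ring_hom (R Quot J) (R Quot J) \<and> inj_on sb (carrier (R Quot J)))
     \<and> red ` Lam = petit_carrier (R Quot J) fb
     \<and> (\<forall>p\<in>Lam. \<forall>q\<in>Lam. red p = red q \<longleftrightarrow> padd R p (pneg R q) \<in> ILam)
     \<and> (\<forall>p\<in>Lam. \<forall>q\<in>Lam. red (padd R p q) = padd (R Quot J) (red p) (red q))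
     \<and> (\<forall>p\<in>Lam. \<forall>q\<in>Lam. red (petit_mult R \<sigma> (cyc_poly R m d) p q) = petit_mult (R Quot J) sb fb (red p) (red q))
     \<and> red (pone R) = pone (R Quot J)
     \<and> (\<forall>a\<in>A. \<forall>p\<in>Lam. red (psmul R a p) = psmul (R Quot J) (J +> a) (red p))"
proof (intro conjI ballI)
  show "ILam \<subseteq> Lam" by blast
  show "pzero R \<in> ILam" using lam_zero J0 by (simp add: pzero_def)
  fix p q assume "p \<in> ILam" "q \<in> ILam"
  thus "padd R p q \<in> ILam" using lam_add Jplus by (auto simp: padd_def)
next
  fix p assume "p \<in> ILam"
  thus "pneg R p \<in> ILam" using lam_neg Jneg by (auto simp: pneg_def)
next
  fix p q assume pq: "p \<in> Lam" "q \<in> ILam"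
  show "petit_mult R \<sigma> (cyc_poly R m d) p q \<in> ILam" using ideal_mult[OF pq] by (rule conjunct1)
  show "petit_mult R \<sigma> (cyc_poly R m d) q p \<in> ILam" using ideal_mult[OF pq] by (rule conjunct2)
next
  show "cring (R Quot J)" by (rule qcring)
  show "sb \<in> ring_hom (R Quot J) (R Quot J)" by (rule sb_hom)
  show "inj_on sb (carrier (R Quot J))" by (rule sb_inj)
  show "red ` Lam = petit_carrier (R Quot J) fb" by (rule red_image)
next
  fix p q assume "p \<in> Lam" "q \<in> Lam"
  thus "(red p = red q) = (padd R p (pneg R q) \<in> ILam)" by (rule red_eq_iff)
next
  fix p q assume "p \<in> Lam" "q \<in> Lam"
  thus "red (padd R p q) = padd (R Quot J) (red p) (red q)"
    using lam_c by (auto simp: reduce_coeffs_def padd_def)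
next
  fix p q assume pq: "p \<in> Lam" "q \<in> Lam"
  show "red (petit_mult R \<sigma> (cyc_poly R m d) p q) = petit_mult (R Quot J) sb fb (red p) (red q)"
    using red_mult[OF lam_spoly[OF pq(1)] lam_spoly[OF pq(2)]] by (rule conjunct2)
next
  show "red (pone R) = pone (R Quot J)" by (rule ext) (simp add: reduce_coeffs_def pone_def if_distrib)
next
  fix a p assume "a \<in> A" "p \<in> Lam"
  thus "red (psmul R a p) = psmul (R Quot J) (J +> a) (red p)"
    using A lam_c by (auto simp: reduce_coeffs_def psmul_def)
qed

end


lemma ring_on_cring:
  assumes "(0::'a::comm_ring_1) \<in> A" "1 \<in> A" "\<And>x y. x \<in> A \<Longrightarrow> y \<in> A \<Longrightarrow> x + y \<in> A"
    "\<And>x y. x \<in> A \<Longrightarrow> y \<in> A \<Longrightarrow> x * y \<in> A" "\<And>x. x \<in> A \<Longrightarrow> - x \<in> A"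
  shows "cring (ring_on A)"
proof (rule cringI)
  show "abelian_group (ring_on A)"
  proof (rule abelian_groupI)
    fix x assume "x \<in> carrier (ring_on A)"
    thus "\<exists>y\<in>carrier (ring_on A). y \<oplus>\<^bsub>ring_on A\<^esub> x = \<zero>\<^bsub>ring_on A\<^esub>"
      using assms by (intro bexI[of _ "- x"]) (auto simp: ring_on_def)
  qed (use assms in \<open>auto simp: ring_on_def algebra_simps\<close>)
  show "comm_monoid (ring_on A)"
    by (rule comm_monoidI) (use assms in \<open>auto simp: ring_on_def algebra_simps\<close>)
qed (auto simp: ring_on_def algebra_simps)

lemma ai_ring: "cring (ring_on (algebraic_integers :: 'a::field_char_0 set))"
proof (rule ring_on_cring)
  have "algebraic_int (0::'a)" "algebraic_int (1::'a)" by auto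
  thus "(0::'a) \<in> algebraic_integers" "(1::'a) \<in> algebraic_integers"
    unfolding algebraic_integers_def algebraic_int_altdef_ipoly by auto
  show "\<And>x y. x \<in> algebraic_integers \<Longrightarrow> y \<in> algebraic_integers \<Longrightarrow> x + y \<in> (algebraic_integers :: 'a set)"
    by (rule ai_add)
  show "\<And>x y. x \<in> algebraic_integers \<Longrightarrow> y \<in> algebraic_integers \<Longrightarrow> x * y \<in> (algebraic_integers :: 'a set)"
    by (rule ai_mult)
  fix x :: 'a assume "x \<in> algebraic_integers"
  hence "algebraic_int x" unfolding algebraic_integers_def algebraic_int_altdef_ipoly by auto
  hence "algebraic_int (-x)" by auto
  thus "- x \<in> algebraic_integers" unfolding algebraic_integers_def algebraic_int_altdef_ipoly by auto
qed

locale autom =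
  fixes \<sigma> :: "'a::field_char_0 \<Rightarrow> 'a"
  assumes bij: "bij \<sigma>" and add: "\<And>x y. \<sigma> (x + y) = \<sigma> x + \<sigma> y" and mult: "\<And>x y. \<sigma> (x * y) = \<sigma> x * \<sigma> y"
begin

lemma zero [simp]: "\<sigma> 0 = 0"
  using add[of 0 0] by simp

lemma neg [simp]: "\<sigma> (- x) = - \<sigma> x"
  using minus_unique[of "\<sigma> x" "\<sigma> (-x)"] add[of x "-x"] by simp

lemma diff [simp]: "\<sigma> (x - y) = \<sigma> x - \<sigma> y"
  using add[of x "-y"] by simp

lemma one [simp]: "\<sigma> 1 = 1"
proof -
  obtain y where y: "\<sigma> y = 1" using bij by (metis bij_pointE)
  have "\<sigma> 1 = \<sigma> 1 * \<sigma> y" using y by simp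
  also have "\<dots> = \<sigma> (1 * y)" by (simp only: mult)
  also have "\<dots> = 1" using y by simp
  finally show ?thesis .
qed

lemma of_nat [simp]: "\<sigma> (of_nat n) = of_nat n"
  by (induct n) (simp_all add: add)

lemma of_int [simp]: "\<sigma> (of_int k) = of_int k"
proof (cases k rule: int_cases)
  case (nonneg n) thus ?thesis by simp
next
  case (neg n)
  hence "(of_int k :: 'a) = - of_nat (Suc n)" by simp
  thus ?thesis by (simp del: of_nat_Suc)
qed

lemma power [simp]: "\<sigma> (x ^ n) = \<sigma> x ^ n"
  by (induct n) (simp_all add: mult)

lemma sum: "\<sigma> (sum f A) = (\<Sum>i\<in>A. \<sigma> (f i))"
  by (induct A rule: infinite_finite_induct) (simp_all add: add)

lemma ai: "x \<in> algebraic_integers \<Longrightarrow> \<sigma> x \<in> algebraic_integers"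
proof -
  assume "x \<in> algebraic_integers"
  then obtain p :: "int poly" where p: "lead_coeff p = 1" "poly (map_poly of_int p) x = 0"
    unfolding algebraic_integers_def by blast
  have "poly (map_poly of_int p) (\<sigma> x) = \<sigma> (poly (map_poly of_int p) x)"
    by (simp add: poly_altdef sum mult coeff_map_poly)
  thus ?thesis using p unfolding algebraic_integers_def by auto
qed

end

theorem theorem1:
  fixes \<sigma> :: "'a::field_char_0 \<Rightarrow> 'a" and m :: nat and F :: "'a set"
    and d :: 'a and I :: "'a set"
  defines "OK \<equiv> (algebraic_integers :: 'a set)"
    and "OKF \<equiv> algebraic_integers \<inter> F"
    and "IOK \<equiv> genideal (ring_on (algebraic_integers :: 'a set)) I"
  assumes numfield: "finite_dim_over_Q (UNIV :: 'a set)"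
    and aut: "bij \<sigma>" "\<forall>x y. \<sigma> (x + y) = \<sigma> x + \<sigma> y" "\<forall>x y. \<sigma> (x * y) = \<sigma> x * \<sigma> y"
    and order: "0 < m" "\<sigma> ^^ m = id" "\<forall>k. 0 < k \<and> k < m \<longrightarrow> \<sigma> ^^ k \<noteq> id"
    and fixF: "F = {x. \<sigma> x = x}"
    and unit_d: "d \<in> OK" "d \<noteq> 0" "inverse d \<in> OK"
    and irred: "skew_irreducible (ring_on (UNIV :: 'a set)) \<sigma> (cyc_poly (ring_on UNIV) m d)"
    and ideal_I: "ideal I (ring_on OKF)" "I \<noteq> {0}"
  shows
    "let R = ring_on OK;
         f = cyc_poly R m d;
         Lam = petit_carrier R f;
         ILam = {p \<in> Lam. \<forall>i. p i \<in> IOK};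
         S = R Quot IOK;
         sb = sigma_bar R IOK \<sigma>;
         fb = cyc_poly S m (a_r_coset R IOK d);
         red = reduce_coeffs R IOK
     in
       \<comment> \<open>I Lambda is a two-sided ideal of Lambda\<close>
       (ILam \<subseteq> Lam \<and> pzero R \<in> ILam
        \<and> (\<forall>p\<in>ILam. \<forall>q\<in>ILam. padd R p q \<in> ILam) \<and> (\<forall>p\<in>ILam. pneg R p \<in> ILam)
        \<and> (\<forall>p\<in>Lam. \<forall>q\<in>ILam. petit_mult R \<sigma> f p q \<in> ILam \<and> petit_mult R \<sigma> f q p \<in> ILam))
       \<comment> \<open>the target is a generalized nonassociative cyclic algebra (S/S0, sigma-bar, d-bar)\<close>
     \<and> (cring S \<and> sb \<in> ring_hom S S \<and> inj_on sb (carrier S))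
       \<comment> \<open>reduction of coefficients induces an isomorphism Lambda / I Lambda to it\<close>
     \<and> red ` Lam = petit_carrier S fb
     \<and> (\<forall>p\<in>Lam. \<forall>q\<in>Lam. red p = red q \<longleftrightarrow> padd R p (pneg R q) \<in> ILam)
     \<and> (\<forall>p\<in>Lam. \<forall>q\<in>Lam. red (padd R p q) = padd S (red p) (red q))
     \<and> (\<forall>p\<in>Lam. \<forall>q\<in>Lam. red (petit_mult R \<sigma> f p q) = petit_mult S sb fb (red p) (red q))
     \<and> red (pone R) = pone S
     \<and> (\<forall>a\<in>OKF. \<forall>p\<in>Lam. red (psmul R a p) = psmul S (a_r_coset R IOK a) (red p))"
proof -
  interpret A: autom \<sigma> using aut by (unfold_locales) auto
  define R where "R = ring_on OK"
  have cR: "cring R" unfolding R_def OK_def by (rule ai_ring)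
  interpret R: cring R by (rule cR)
  have carR: "carrier R = OK" by (simp add: R_def ring_on_def)
  have sig: "\<sigma> \<in> ring_hom R R"
    by (rule ring_hom_memI) (auto simp: R_def ring_on_def OK_def A.ai A.add A.mult)
  have OKF_sub: "OKF \<subseteq> carrier R" using carR by (auto simp: OKF_def OK_def)
  have I_sub: "I \<subseteq> OKF"
    using additive_subgroup.a_subset[OF ideal.axioms(1)[OF ideal_I(1)]] by (simp add: ring_on_def)
  have IOK_eq: "IOK = genideal R I" by (simp add: IOK_def R_def OK_def)
  have Icar: "I \<subseteq> carrier R" using I_sub OKF_sub by blast
  have idl: "ideal IOK R" unfolding IOK_eq by (rule R.genideal_ideal[OF Icar])
  have hr: "ring_hom_ring R R \<sigma>" by (rule ring_hom_ringI2[OF R.ring_axioms R.ring_axioms sig])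
  have vid: "ideal {r \<in> carrier R. \<sigma> r \<in> IOK} R" by (rule ring_hom_ring.ideal_vimage[OF hr idl])
  have "I \<subseteq> {r \<in> carrier R. \<sigma> r \<in> IOK}"
  proof
    fix x assume x: "x \<in> I"
    hence "\<sigma> x = x" using I_sub fixF by (auto simp: OKF_def)
    moreover have "x \<in> IOK" using R.genideal_self[OF Icar] x IOK_eq by auto
    ultimately show "x \<in> {r \<in> carrier R. \<sigma> r \<in> IOK}" using x Icar by auto
  qed
  hence "IOK \<subseteq> {r \<in> carrier R. \<sigma> r \<in> IOK}"
    unfolding IOK_eq[symmetric] using R.genideal_minimal[OF vid] IOK_eq by simp
  hence sigJ: "\<forall>x\<in>IOK. \<sigma> x \<in> IOK" by blast
  have per: "\<forall>x\<in>carrier R. (\<sigma> ^^ m) x = x" using order(2) by simp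
  have dR: "d \<in> carrier R" using unit_d(1) carR by simp
  have sk: "skew R \<sigma>" by (rule skew.intro[OF cR]) (rule skew_axioms.intro[OF sig])
  have ski: "skew_ideal R \<sigma> IOK m d"
    by (rule skew_ideal.intro[OF sk]) (rule skew_ideal_axioms.intro[OF idl sigJ per order(1) dR])
  note X = skew_ideal.generic[OF ski OKF_sub]
  show ?thesis unfolding Let_def R_def[symmetric] by (rule X)
qed


end
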